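(* For all $x\in[0,\infty)$, $$0\le\lim_{k\to\infty}\left|\frac{x\,\mathcal{P}_{k+1}(x)}{\mathcal{P}_k(x)}\right|\le 2,$$ where $\mathcal{P}_k(x)={}_2F_1\!\left(\frac{k}{2},\frac{k+1}{2};\frac{2k+3}{2};-x^2\right)$.
   Context: ${}_2F_1(a,b;c;z)$ denotes the Gauss hypergeometric function. *)

theory Defs
  imports "HOL-Analysis.Analysis"
begin

text \<open>Inside the unit disc it is
the hypergeometric series; outside (we only need real z \<le> -1) it is the
principal-branch analytic continuation, given by Euler's integral representation
(valid for c > b > 0 and real z < 1).\<close>

definition hyp2F1_series :: "real \<Rightarrow> real \<Rightarrow> real \<Rightarrow> real \<Rightarrow> real" where
  "hyp2F1_series a b c z =
     (\<Sum>n. pochhammer a n * pochhammer b n / (pochhammer c n * fact n) * z ^ n)"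

definition hyp2F1_euler :: "real \<Rightarrow> real \<Rightarrow> real \<Rightarrow> real \<Rightarrow> real" where
  "hyp2F1_euler a b c z =
     Gamma c / (Gamma b * Gamma (c - b)) *
     integral {0..1} (\<lambda>t. t powr (b - 1) * (1 - t) powr (c - b - 1) * (1 - z * t) powr (- a))"

definition hyp2F1 :: "real \<Rightarrow> real \<Rightarrow> real \<Rightarrow> real \<Rightarrow> real" where
  "hyp2F1 a b c z = (if \<bar>z\<bar> < 1 then hyp2F1_series a b c z else hyp2F1_euler a b c z)"

definition calP :: "nat \<Rightarrow> real \<Rightarrow> real" where
  "calP k x = hyp2F1 (real k / 2) ((real k + 1) / 2) ((2 * real k + 3) / 2) (- (x ^ 2))"

end

theory Submission
  imports Defs
begin

lemma binom_ser:
  fixes a z t :: real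
  assumes "\<bar>z * t\<bar> < 1"
  shows "(\<lambda>n. pochhammer a n / fact n * z ^ n * t ^ n) sums ((1 - z * t) powr (- a))"
proof -
  have "(\<lambda>n. ((-a) gchoose n) * (- (z * t)) ^ n) sums (1 + - (z * t)) powr (-a)"
    by (rule gen_binomial_real) (use assms in simp)
  moreover have "((-a) gchoose n) * (- (z * t)) ^ n = pochhammer a n / fact n * z ^ n * t ^ n" for n
  proof -
    have "(-1::real)^n * (-1)^n = 1" by (simp flip: power_mult_distrib)
    then show ?thesis
      by (simp add: gbinomial_pochhammer power_mult_distrib power_minus[of "z*t"])
  qed
  ultimately show ?thesis by simp
qed

lemma poch_abs_summable:
  fixes a w :: real
  assumes "a \<ge> 0" "0 \<le> w" "w < 1"
  shows "summable (\<lambda>n. pochhammer a n / fact n * w ^ n)"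
proof -
  have "(\<lambda>n. pochhammer a n / fact n * w ^ n * 1 ^ n) sums ((1 - w * 1) powr (- a))"
    by (rule binom_ser) (use assms in simp)
  then show ?thesis by (simp add: sums_iff)
qed


lemma beta_term:
  fixes b d :: real and n :: nat
  assumes "b > 0" "d > 0"
  shows "((\<lambda>t. t powr (b - 1) * (1 - t) powr (d - 1) * t ^ n) has_integral Beta (b + n) d) {0..1}"
proof -
  have "((\<lambda>t. t powr (b + n - 1) * (1 - t) powr (d - 1)) has_integral Beta (b + n) d) {0..1}"
    by (rule has_integral_Beta_real) (use assms in auto)
  moreover have "t powr (b + n - 1) * (1 - t) powr (d - 1) = t powr (b - 1) * (1 - t) powr (d - 1) * t ^ n"
    if "t \<in> {0..1}" for t
  proof (cases "t = 0")
    case True then show ?thesis by simp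
  next
    case False
    with that have "t > 0" by auto
    then have "t powr (b + n - 1) = t powr (b - 1) * t ^ n"
      by (simp add: powr_add[symmetric] powr_realpow[symmetric] algebra_simps)
    then show ?thesis by simp
  qed
  ultimately show ?thesis
    by (metis (no_types, lifting) has_integral_cong)
qed

lemma gamma_beta_ratio:
  fixes b c :: real and n :: nat
  assumes "b > 0" "c - b > 0"
  shows "Gamma c / (Gamma b * Gamma (c - b)) * Beta (b + n) (c - b)
         = pochhammer b n / pochhammer c n"
proof -
  have c: "c > 0" using assms by simp
  have nb: "b \<notin> \<int>\<^sub>\<le>\<^sub>0" and nc: "c \<notin> \<int>\<^sub>\<le>\<^sub>0"
    using assms c by (auto elim!: nonpos_Ints_cases)
  have g: "Gamma b > 0" "Gamma c > 0" "Gamma (c - b) > 0" "Gamma (b + n) > 0" "Gamma (c + n) > 0"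
    using assms c by (auto intro!: Gamma_real_pos)
  show ?thesis
    unfolding Beta_def pochhammer_Gamma[OF nb] pochhammer_Gamma[OF nc]
    using g by (simp add: field_simps)
qed

lemma series_euler:
  fixes a b c z :: real
  assumes a: "a > 0" and b: "b > 1" and cb: "c - b > 1" and z: "\<bar>z\<bar> < 1"
  shows "hyp2F1_series a b c z = hyp2F1_euler a b c z"
proof -
  define K where "K = Gamma c / (Gamma b * Gamma (c - b))"
  define f where "f = (\<lambda>n t. t powr (b - 1) * (1 - t) powr (c - b - 1) *
                           (pochhammer a n / fact n * z ^ n * t ^ n))"
  define G where "G = (\<lambda>t. t powr (b - 1) * (1 - t) powr (c - b - 1) * (1 - z * t) powr (- a))"
  define M where "M = (\<lambda>n. pochhammer a n / fact n * \<bar>z\<bar> ^ n)"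
  have summM: "summable M" unfolding M_def
    by (rule poch_abs_summable) (use a z in auto)
  have pa: "pochhammer a n \<ge> 0" for n using a by (intro pochhammer_nonneg)
  have bnd: "norm (f n t) \<le> M n" if "t \<in> cbox 0 1" for n t
  proof -
    from that have t: "0 \<le> t" "t \<le> 1" by auto
    have p1: "\<bar>t powr (b - 1)\<bar> \<le> 1" using t b by (auto intro!: powr_le1)
    have p2: "\<bar>(1 - t) powr (c - b - 1)\<bar> \<le> 1" using t cb by (auto intro!: powr_le1)
    have p3: "\<bar>t ^ n\<bar> \<le> 1" using t by (simp add: power_le_one power_abs)
    have "norm (f n t) = \<bar>t powr (b - 1)\<bar> * \<bar>(1 - t) powr (c - b - 1)\<bar> * \<bar>t ^ n\<bar> * M n"
      unfolding f_def M_def using pa by (simp add: abs_mult power_abs)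
    also have "\<dots> \<le> 1 * 1 * 1 * M n"
      using p1 p2 p3 pa by (intro mult_mono) (auto simp: M_def)
    finally show ?thesis by simp
  qed
  have ul: "uniform_limit (cbox 0 1) (\<lambda>N t. \<Sum>n<N. f n t) (\<lambda>t. suminf (\<lambda>n. f n t)) sequentially"
    by (rule Weierstrass_m_test[OF bnd summM])
  have sG: "suminf (\<lambda>n. f n t) = G t" if "t \<in> cbox (0::real) 1" for t
  proof -
    have "\<bar>z * t\<bar> < 1" using that z by (auto simp: abs_mult intro: le_less_trans[OF mult_left_le])
    then have "(\<lambda>n. pochhammer a n / fact n * z ^ n * t ^ n) sums ((1 - z * t) powr (- a))"
      by (rule binom_ser)
    then have "(\<lambda>n. f n t) sums G t" unfolding f_def G_def by (rule sums_mult)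
    then show ?thesis by (simp add: sums_iff)
  qed
  have ul2: "uniform_limit (cbox 0 1) (\<lambda>N t. \<Sum>n<N. f n t) G sequentially"
    using ul uniform_limit_cong'[of "cbox 0 1" "\<lambda>N t. \<Sum>n<N. f n t" "\<lambda>N t. \<Sum>n<N. f n t" "\<lambda>t. suminf (\<lambda>n. f n t)" G sequentially] sG by blast
  have cont: "continuous_on (cbox 0 1) (\<lambda>t. \<Sum>n<N. f n t)" for N
    unfolding f_def using b cb
    by (intro continuous_intros continuous_on_powr') (auto)
  obtain I J where I: "\<And>N. ((\<lambda>t. \<Sum>n<N. f n t) has_integral I N) (cbox 0 1)"
    and J: "(G has_integral J) (cbox 0 1)" and IJ: "I \<longlonglongrightarrow> J"
    by (rule uniform_limit_integral_cbox[OF ul2 cont]) auto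
  have fint: "(f n has_integral (pochhammer a n / fact n * z ^ n * Beta (b + n) (c - b))) {0..1}" for n
  proof -
    have "((\<lambda>t. t powr (b - 1) * (1 - t) powr ((c - b) - 1) * t ^ n) has_integral Beta (b + n) (c - b)) {0..1}"
      by (rule beta_term) (use b cb in auto)
    from has_integral_mult_right[OF this, of "pochhammer a n / fact n * z ^ n"]
    show ?thesis unfolding f_def by (simp add: mult_ac)
  qed
  have IN: "I N = (\<Sum>n<N. pochhammer a n / fact n * z ^ n * Beta (b + n) (c - b))" for N
  proof -
    have "((\<lambda>t. \<Sum>n<N. f n t) has_integral (\<Sum>n<N. pochhammer a n / fact n * z ^ n * Beta (b + n) (c - b))) {0..1}"
      by (rule has_integral_sum) (use fint in auto)
    with I[of N] show ?thesis by (auto dest: has_integral_unique)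
  qed
  have "(\<lambda>N. K * I N) \<longlonglongrightarrow> K * J" by (intro tendsto_intros IJ)
  moreover have "K * I N = (\<Sum>n<N. pochhammer a n * pochhammer b n / (pochhammer c n * fact n) * z ^ n)" for N
    unfolding IN sum_distrib_left
  proof (rule sum.cong[OF refl])
    fix n assume "n \<in> {..<N}"
    have "K * Beta (b + n) (c - b) = pochhammer b n / pochhammer c n"
      unfolding K_def by (rule gamma_beta_ratio) (use b cb in auto)
    have pc: "pochhammer c n > 0" using b cb by (intro pochhammer_pos) auto
    have "K * (pochhammer a n / fact n * z ^ n * Beta (b + real n) (c - b)) =
       pochhammer a n / fact n * z ^ n * (K * Beta (b + n) (c - b))" by (simp add: mult_ac)
    also have "\<dots> = pochhammer a n / fact n * z ^ n * (pochhammer b n / pochhammer c n)"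
      by (simp only: \<open>K * Beta (b + n) (c - b) = pochhammer b n / pochhammer c n\<close>)
    also have "\<dots> = pochhammer a n * pochhammer b n / (pochhammer c n * fact n) * z ^ n"
      using pc by (simp add: field_simps)
    finally show "K * (pochhammer a n / fact n * z ^ n * Beta (b + real n) (c - b)) =
          pochhammer a n * pochhammer b n / (pochhammer c n * fact n) * z ^ n" .
  qed
  ultimately have "(\<lambda>n. pochhammer a n * pochhammer b n / (pochhammer c n * fact n) * z ^ n) sums (K * J)"
    unfolding sums_def by simp
  moreover have "hyp2F1_euler a b c z = K * J"
    unfolding hyp2F1_euler_def K_def G_def[symmetric] using J by (simp add: integral_unique)
  ultimately show ?thesis unfolding hyp2F1_series_def by (simp add: sums_iff)
qed




definition FF :: "real \<Rightarrow> nat \<Rightarrow> real \<Rightarrow> real" where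
  "FF x k t = t powr ((real k + 1) / 2 - 1) * (1 - t) powr ((2 * real k + 3) / 2 - (real k + 1) / 2 - 1)
     * (1 - (- (x ^ 2)) * t) powr (- (real k / 2))"

definition II :: "real \<Rightarrow> nat \<Rightarrow> real" where
  "II x k = integral {0..1} (FF x k)"

definition CC :: "nat \<Rightarrow> real" where
  "CC k = Gamma ((2 * real k + 3) / 2) / (Gamma ((real k + 1) / 2) * Gamma ((2 * real k + 3) / 2 - (real k + 1) / 2))"

definition hh :: "real \<Rightarrow> real \<Rightarrow> real" where
  "hh x t = t powr (1/2) * (1 - t) powr (1/2) * (1 - (- (x ^ 2)) * t) powr (- (1/2))"

lemma calP_eq:
  assumes "x \<ge> 0" "k \<ge> 2"
  shows "calP k x = CC k * II x k"
proof -
  have "hyp2F1 (real k / 2) ((real k + 1) / 2) ((2 * real k + 3) / 2) (- (x ^ 2))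
      = hyp2F1_euler (real k / 2) ((real k + 1) / 2) ((2 * real k + 3) / 2) (- (x ^ 2))"
  proof (cases "\<bar>- (x ^ 2)\<bar> < 1")
    case True
    then have "hyp2F1 (real k / 2) ((real k + 1) / 2) ((2 * real k + 3) / 2) (- (x ^ 2))
      = hyp2F1_series (real k / 2) ((real k + 1) / 2) ((2 * real k + 3) / 2) (- (x ^ 2))"
      unfolding hyp2F1_def by simp
    also have "\<dots> = hyp2F1_euler (real k / 2) ((real k + 1) / 2) ((2 * real k + 3) / 2) (- (x ^ 2))"
      by (rule series_euler) (use assms True in \<open>auto simp: field_simps\<close>)
    finally show ?thesis .
  next
    case False
    then show ?thesis unfolding hyp2F1_def by simp
  qed
  then show ?thesis
    unfolding calP_def hyp2F1_euler_def CC_def II_def FF_def by simp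
qed

lemma FF_Suc:
  assumes "0 \<le> t"
  shows "FF x (Suc k) t = FF x k t * hh x t"
proof -
  have e1: "(real (Suc k) + 1) / 2 - 1 = ((real k + 1) / 2 - 1) + 1/2" by (simp add: field_simps)
  have e2: "(2 * real (Suc k) + 3) / 2 - (real (Suc k) + 1) / 2 - 1 = ((2 * real k + 3) / 2 - (real k + 1) / 2 - 1) + 1/2" by (simp add: field_simps)
  have e3: "- (real (Suc k) / 2) = - (real k / 2) + - (1/2)" by (simp add: field_simps)
  show ?thesis
    unfolding FF_def hh_def e1 e2 e3 powr_add by (simp add: mult_ac)
qed

lemma FF_nonneg: "FF x k t \<ge> 0" unfolding FF_def by simp
lemma hh_nonneg: "hh x t \<ge> 0" unfolding hh_def by simp

lemma x_hh_le:
  assumes "x \<ge> 0" "0 \<le> t" "t \<le> 1"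
  shows "x * hh x t \<le> 1"
proof -
  have p: "1 + x^2 * t > 0" using assms by (simp add: add_pos_nonneg)
  have "hh x t = sqrt t * sqrt (1 - t) / sqrt (1 + x^2 * t)"
    unfolding hh_def using assms p
    by (simp add: powr_half_sqrt powr_minus divide_simps)
  also have "\<dots> = sqrt (t * (1 - t) / (1 + x^2 * t))"
    by (simp add: real_sqrt_mult real_sqrt_divide)
  finally have hhs: "hh x t = sqrt (t * (1 - t) / (1 + x^2 * t))" .
  then have "x * hh x t = sqrt (x^2) * sqrt (t * (1 - t) / (1 + x^2 * t))"
    using assms by simp
  also have "\<dots> = sqrt (x^2 * (t * (1 - t) / (1 + x^2 * t)))"
    by (simp only: real_sqrt_mult)
  finally have "x * hh x t = sqrt (x^2 * (t * (1 - t) / (1 + x^2 * t)))" .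
  also have "\<dots> \<le> sqrt 1"
  proof (rule real_sqrt_le_mono)
    have "x^2 * (t * (1 - t)) \<le> 1 + x^2 * t"
      using assms by (simp add: algebra_simps)
    then show "x^2 * (t * (1 - t) / (1 + x^2 * t)) \<le> 1"
      using p by (simp add: divide_simps)
  qed
  finally show ?thesis by simp
qed

lemma pos1: "0 \<le> t \<Longrightarrow> 1 + x^2 * (t::real) \<noteq> 0"
  by (smt (verit) mult_nonneg_nonneg zero_le_power2)

lemma FF_cont:
  assumes "k \<ge> 2"
  shows "continuous_on {0..1} (FF x k)"
proof -
  have c1: "continuous_on {0..1} (\<lambda>t::real. t powr ((real k + 1) / 2 - 1))"
    by (rule continuous_on_powr') (use assms in \<open>auto intro!: continuous_intros simp: field_simps\<close>)
  have c2: "continuous_on {0..1} (\<lambda>t::real. (1 - t) powr ((2 * real k + 3) / 2 - (real k + 1) / 2 - 1))"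
    by (rule continuous_on_powr') (use assms in \<open>auto intro!: continuous_intros simp: field_simps\<close>)
  have c3: "continuous_on {0..1} (\<lambda>t::real. (1 - (- (x ^ 2)) * t) powr (- (real k / 2)))"
    by (rule continuous_on_powr') (auto intro!: continuous_intros dest: pos1[of _ x])
  show ?thesis unfolding FF_def by (intro continuous_on_mult c1 c2 c3)
qed

lemma FF_int: "k \<ge> 2 \<Longrightarrow> (FF x k has_integral II x k) {0..1}"
  unfolding II_def by (intro integrable_integral integrable_continuous_interval FF_cont)

lemma II_pos:
  assumes "k \<ge> 2"
  shows "II x k > 0"
proof -
  have ge: "II x k \<ge> 0" unfolding II_def using FF_nonneg by (intro integral_nonneg integrable_continuous_interval FF_cont assms) auto
  have "FF x k (1/2) > 0" unfolding FF_def using pos1[of "1/2" x] by (intro mult_pos_pos) auto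
  moreover have "FF x k (1/2) = 0" if "II x k = 0"
    by (rule has_integral_0_cbox_imp_0[of 0 1 "FF x k"])
       (use FF_cont[OF assms, of x] FF_int[OF assms, of x] that FF_nonneg in auto)
  ultimately show ?thesis using ge by force
qed

lemma II_le:
  assumes "k \<ge> 2" "x \<ge> 0"
  shows "x * II x (Suc k) \<le> II x k"
proof -
  have i1: "((\<lambda>t. x * FF x (Suc k) t) has_integral x * II x (Suc k)) {0..1}"
    using FF_int[of "Suc k"] assms by (intro has_integral_mult_right) auto
  have pw: "x * FF x (Suc k) t \<le> FF x k t" if "t \<in> {0..1}" for t
  proof -
    have "x * FF x (Suc k) t = FF x k t * (x * hh x t)" using that by (simp add: FF_Suc)
    also have "\<dots> \<le> FF x k t * 1"
      using x_hh_le[of x t] that assms FF_nonneg by (intro mult_left_mono) auto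
    finally show ?thesis by simp
  qed
  show ?thesis by (rule has_integral_le[OF i1 FF_int[OF assms(1)]]) (use pw in auto)
qed

lemma II_logconv:
  assumes "k \<ge> 2"
  shows "II x (Suc k) ^ 2 \<le> II x k * II x (Suc (Suc k))"
proof -
  define a where "a = II x (Suc k) / II x k"
  have pos: "II x k > 0" by (rule II_pos[OF assms])
  have "((\<lambda>t. a^2 * FF x k t - 2 * a * FF x (Suc k) t + FF x (Suc (Suc k)) t) has_integral
        (a^2 * II x k - 2 * a * II x (Suc k) + II x (Suc (Suc k)))) {0..1}"
    using assms by (intro has_integral_add has_integral_diff has_integral_mult_right FF_int) auto
  moreover have "a^2 * FF x k t - 2 * a * FF x (Suc k) t + FF x (Suc (Suc k)) t \<ge> 0" if "t \<in> {0..1}" for t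
  proof -
    have "a^2 * FF x k t - 2 * a * FF x (Suc k) t + FF x (Suc (Suc k)) t = FF x k t * (a - hh x t)^2"
      using that by (simp add: FF_Suc power2_eq_square algebra_simps)
    then show ?thesis using FF_nonneg by simp
  qed
  ultimately have "a^2 * II x k - 2 * a * II x (Suc k) + II x (Suc (Suc k)) \<ge> 0"
    by (rule has_integral_nonneg)
  then have "II x (Suc (Suc k)) \<ge> II x (Suc k)^2 / II x k"
    using pos unfolding a_def by (simp add: power2_eq_square field_simps)
  then show ?thesis using pos by (simp add: field_simps)
qed


lemma CC_Suc: "CC (Suc k) = (2 + inverse (real (Suc k))) * CC k"
proof -
  define A where "A = (2 * real k + 3) / 2"
  define B where "B = (real k + 1) / 2"
  define D where "D = (real k + 2) / 2"
  have A: "A > 0" and B: "B > 0" and D: "D > 0" unfolding A_def B_def D_def by auto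
  have nA: "A \<notin> \<int>\<^sub>\<le>\<^sub>0" and nB: "B \<notin> \<int>\<^sub>\<le>\<^sub>0"
    using A B by (auto elim!: nonpos_Ints_cases)
  have e1: "(2 * real (Suc k) + 3) / 2 = A + 1" unfolding A_def by (simp add: field_simps)
  have e2: "(real (Suc k) + 1) / 2 = D" unfolding D_def by (simp add: field_simps)
  have e3: "(2 * real (Suc k) + 3) / 2 - (real (Suc k) + 1) / 2 = B + 1" unfolding B_def by (simp add: field_simps)
  have e4: "(2 * real k + 3) / 2 - (real k + 1) / 2 = D" unfolding D_def by (simp add: field_simps)
  have e6: "A + 1 - D = B + 1" unfolding A_def B_def D_def by (simp add: field_simps)
  have e5: "A - B = D" unfolding A_def B_def D_def by (simp add: field_simps)
  have CCk: "CC k = Gamma A / (Gamma B * Gamma D)" unfolding CC_def A_def[symmetric] B_def[symmetric] e5 ..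
  have "CC (Suc k) = Gamma (A + 1) / (Gamma D * Gamma (B + 1))" unfolding CC_def e1 e2 e6 ..
  also have "\<dots> = (A / B) * (Gamma A / (Gamma B * Gamma D))"
    unfolding Gamma_plus1[OF nA] Gamma_plus1[OF nB] using A B D by (simp add: field_simps)
  also have "A / B = 2 + inverse (real (Suc k))" unfolding A_def B_def by (simp add: field_simps)
  finally show ?thesis unfolding CCk .
qed

lemma CC_pos: "CC k > 0"
  unfolding CC_def by (intro divide_pos_pos mult_pos_pos Gamma_real_pos) (auto simp: field_simps)

lemma canc: "0 < (c::real) \<Longrightarrow> x * (r * c * i1) / (c * i0) = r * (x * i1 / i0)"
  by (cases "i0 = 0") (simp_all add: field_simps)

theorem lemma3:
  fixes x :: real
  assumes "x \<ge> 0"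
  shows "\<exists>L. (\<lambda>k. \<bar>x * calP (Suc k) x / calP k x\<bar>) \<longlonglongrightarrow> L \<and> 0 \<le> L \<and> L \<le> 2"
proof (cases "x = 0")
  case True
  then show ?thesis by (intro exI[of _ 0]) simp
next
  case False
  with assms have x: "x > 0" by simp
  define s where "s = (\<lambda>k. x * II x (Suc k) / II x k)"
  define u where "u = (\<lambda>n. s (n + 2))"
  have spos: "s k > 0" if "k \<ge> 2" for k
    unfolding s_def using II_pos[of k x] II_pos[of "Suc k" x] that x by simp
  have sle: "s k \<le> 1" if "k \<ge> 2" for k
    unfolding s_def using II_pos[of k x] II_le[of k x] that x by simp
  have smono: "s k \<le> s (Suc k)" if "k \<ge> 2" for k
  proof -
    have p0: "II x k > 0" and p1: "II x (Suc k) > 0" using II_pos that by auto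
    have lc: "II x (Suc k) ^ 2 \<le> II x k * II x (Suc (Suc k))" by (rule II_logconv) (use that in auto)
    have "II x (Suc k) / II x k \<le> II x (Suc (Suc k)) / II x (Suc k)"
      using p0 p1 lc by (simp add: divide_simps power2_eq_square mult.commute)
    then have "x * (II x (Suc k) / II x k) \<le> x * (II x (Suc (Suc k)) / II x (Suc k))"
      by (rule mult_left_mono) (use x in simp)
    then show ?thesis unfolding s_def by simp
  qed
  have inc: "incseq u" unfolding u_def by (intro incseq_SucI) (simp add: smono)
  have bd: "\<forall>i. u i \<le> 1" unfolding u_def using sle by simp
  obtain L' where uL: "u \<longlonglongrightarrow> L'" and uleL: "\<forall>i. u i \<le> L'"
    using incseq_convergent[OF inc bd] by blast
  have "u 0 = s 2" by (simp add: u_def numeral_2_eq_2)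
  then have L'pos: "L' \<ge> 0" using uleL[rule_format, of 0] spos[of 2] by simp
  have L'le: "L' \<le> 1" by (rule LIMSEQ_le_const2[OF uL]) (use bd in auto)
  have r: "(\<lambda>k. 2 + inverse (real (Suc k))) \<longlonglongrightarrow> 2"
    using tendsto_add[OF tendsto_const LIMSEQ_inverse_real_of_nat, of 2] by simp
  have r2: "(\<lambda>n. 2 + inverse (real (Suc (n + 2)))) \<longlonglongrightarrow> 2"
    using LIMSEQ_ignore_initial_segment[OF r, of 2] by simp
  have eq: "\<bar>x * calP (Suc (n + 2)) x / calP (n + 2) x\<bar> = (2 + inverse (real (Suc (n + 2)))) * u n" for n
  proof -
    let ?k = "n + 2"
    have "x * calP (Suc ?k) x / calP ?k x = x * (CC (Suc ?k) * II x (Suc ?k)) / (CC ?k * II x ?k)"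
      using calP_eq[of x ?k] calP_eq[of x "Suc ?k"] assms by simp
    also have "\<dots> = (2 + inverse (real (Suc ?k))) * s ?k"
      unfolding CC_Suc s_def using CC_pos[of ?k] by (rule canc)
    finally have "x * calP (Suc ?k) x / calP ?k x = (2 + inverse (real (Suc ?k))) * u n"
      unfolding u_def .
    moreover have "(2 + inverse (real (Suc ?k))) * u n \<ge> 0"
      using spos[of ?k] unfolding u_def by (simp add: add_pos_nonneg)
    ultimately show ?thesis by simp
  qed
  have "(\<lambda>n. \<bar>x * calP (Suc (n + 2)) x / calP (n + 2) x\<bar>) \<longlonglongrightarrow> 2 * L'"
    unfolding eq by (intro tendsto_mult r2 uL)
  then have "(\<lambda>k. \<bar>x * calP (Suc k) x / calP k x\<bar>) \<longlonglongrightarrow> 2 * L'"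
    by (rule LIMSEQ_offset)
  then show ?thesis using L'pos L'le by (intro exI[of _ "2 * L'"]) auto
qed

end
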